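(* Let $\delta\in(0,1)$, $D\ge1$ and $q\ge2$ be constants, let $q_c$ be an integer with $1\le q_c\le q$, and let $\alpha=\frac{\delta}{100D\log q}$. Define $g_\alpha(k)=\sum_{i=0}^{k-1}q_c^{\alpha i}$. Let $\mathcal F$ be any family of probability distributions $\nu$, each supported on subsets of a set $U_\nu$ with $|U_\nu|\le D$ and satisfying $\mathbb E_{S\sim\nu}[|S|]\le1-\delta$. Then $$\beta(\alpha):=\sup_{\nu\in\mathcal F}\sum_{S}\nu(S)^{1-\alpha}g_\alpha(|S|)<1.$$
   Context: $\log$ is the natural logarithm. (In the paper, $\mathcal F$ is the set of distributions $\nu$ of the set $S$ sampled in the invocations of an abstract marginal sampler whose continuation sets have size at most $q_c$, under the hypotheses $\mathbb E_\nu|S|\le1-\delta$ and $|\bigcup_{S\in\mathrm{supp}\nu}S|\le D$.) *)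

theory Defs
  imports "HOL-Probability.Probability"
begin

definition g_alpha :: "nat \<Rightarrow> real \<Rightarrow> nat \<Rightarrow> real" where
  "g_alpha qc \<alpha> k = (\<Sum>i<k. real qc powr (\<alpha> * real i))"

definition beta_sum :: "nat \<Rightarrow> real \<Rightarrow> 'a set pmf \<Rightarrow> real" where
  "beta_sum qc \<alpha> \<nu> = (\<Sum>S\<in>set_pmf \<nu>. pmf \<nu> S powr (1 - \<alpha>) * g_alpha qc \<alpha> (card S))"

end

theory Submission
  imports Defs
begin

lemma young_pt:
  fixes p a e :: real
  assumes "0 < p" "0 < a" "a < 1" "0 \<le> e"
  shows "p powr (1 - a) \<le> exp e * p + a * exp (- e * (1 - a) / a)"
proof -
  have "(exp e * p) powr (1 - a) * (exp (- e * (1 - a) / a)) powr a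
        \<le> (1 - a) * (exp e * p) + a * exp (- e * (1 - a) / a)"
    by (rule Youngs_inequality_0) (use assms in auto)
  moreover have "(exp e * p) powr (1 - a) * (exp (- e * (1 - a) / a)) powr a = p powr (1 - a)"
  proof -
    have 1: "(exp e * p) powr (1 - a) = exp ((1 - a) * e) * p powr (1 - a)"
      using assms by (simp add: powr_def ln_mult algebra_simps flip: exp_add)
    have "a * (- e * (1 - a) / a) = - ((1 - a) * e)" using assms by (simp add: field_simps)
    hence 2: "(exp (- e * (1 - a) / a)) powr a = exp (- ((1 - a) * e))"
      by (simp add: powr_def mult.commute)
    have 3: "exp ((1 - a) * e) * exp (- ((1 - a) * e)) = 1" by (simp flip: exp_add)
    show ?thesis unfolding 1 2 using 3 by (simp add: algebra_simps)
  qed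
  moreover have "(1 - a) * (exp e * p) \<le> exp e * p"
    using assms by (simp add: mult_left_le_one_le)
  ultimately show ?thesis by linarith
qed

theorem lemma4p5:
  fixes \<delta> D q :: real and qc :: nat and F :: "'a set pmf set"
  assumes "0 < \<delta>" "\<delta> < 1" "D \<ge> 1" "q \<ge> 2" "1 \<le> qc" "real qc \<le> q"
    and "F \<noteq> {}"
    and "\<And>\<nu>. \<nu> \<in> F \<Longrightarrow> \<exists>U. finite U \<and> real (card U) \<le> D \<and> set_pmf \<nu> \<subseteq> Pow U"
    and "\<And>\<nu>. \<nu> \<in> F \<Longrightarrow> measure_pmf.expectation \<nu> (\<lambda>S. real (card S)) \<le> 1 - \<delta>"
  shows "(SUP \<nu>\<in>F. beta_sum qc (\<delta> / (100 * D * ln q)) \<nu>) < 1"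
proof -
  define a where "a = \<delta> / (100 * D * ln q)"
  define e where "e = \<delta> / 10"
  define E where "E = exp (- e * (1 - a) / a)"
  define M where "M = exp (\<delta> / 100)"
  have ln2: "ln 2 \<ge> (1/2::real)" using ln_2_less_1 ln2_ge_two_thirds by linarith
  have lnq: "ln q \<ge> ln 2" using assms(4) by simp
  have lnqpos: "ln q > 0" using ln2 lnq by linarith
  have apos: "a > 0" unfolding a_def using assms lnqpos by simp
  have aD: "a * D * ln q = \<delta> / 100" unfolding a_def using assms lnqpos by (simp add: field_simps)
  have "100 * D * ln q \<ge> 50" using assms(3) lnq ln2
    using mult_mono[of 1 D "1/2" "ln q"] by linarith
  hence ale: "a \<le> \<delta> / 50" unfolding a_def using assms
    by (intro divide_left_mono) auto
  have alt: "a \<le> 1/2" using ale assms by simp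
  have Mpos: "M > 0" unfolding M_def by simp
  define c where "c = M * (exp e * (1 - \<delta>) + a)"
  have bound: "beta_sum qc a \<nu> \<le> c" if nuF: "\<nu> \<in> F" for \<nu>
  proof -
    obtain U where U: "finite U" "real (card U) \<le> D" "set_pmf \<nu> \<subseteq> Pow U"
      using assms(8)[OF nuF] by blast
    define N where "N = card U"
    have finS: "finite (set_pmf \<nu>)" using U finite_subset by blast
    have cardS: "card S \<le> N" if "S \<in> set_pmf \<nu>" for S
      using U that unfolding N_def by (auto intro: card_mono)
    have gb: "g_alpha qc a k \<le> real k * M" if "k \<le> N" for k
    proof -
      have "qc powr (a * real i) \<le> M" if "i < k" for i
      proof -
        have "real i \<le> D" using \<open>i < k\<close> \<open>k \<le> N\<close> U(2) N_def by linarith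
        moreover have "ln (real qc) \<le> ln q" using assms(5,6) by simp
        moreover have "ln (real qc) \<ge> 0" using assms(5) by simp
        ultimately have "a * real i * ln (real qc) \<le> a * D * ln q"
          using apos by (intro mult_mono) auto
        thus ?thesis unfolding M_def using assms(5) aD by (simp add: powr_def)
      qed
      hence "g_alpha qc a k \<le> (\<Sum>i<k. M)" unfolding g_alpha_def by (intro sum_mono) auto
      thus ?thesis by simp
    qed
    have exp_eq: "measure_pmf.expectation \<nu> (\<lambda>S. real (card S)) = (\<Sum>S\<in>set_pmf \<nu>. real (card S) * pmf \<nu> S)"
      by (rule integral_measure_pmf_real) (use finS in auto)
    have "beta_sum qc a \<nu> \<le> (\<Sum>S\<in>set_pmf \<nu>. (exp e * pmf \<nu> S + a * E) * (real (card S) * M))"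
      unfolding beta_sum_def
    proof (intro sum_mono mult_mono)
      fix S assume S: "S \<in> set_pmf \<nu>"
      show "pmf \<nu> S powr (1 - a) \<le> exp e * pmf \<nu> S + a * E"
        unfolding E_def using young_pt[of "pmf \<nu> S" a e] S apos alt assms(1)
        by (simp add: set_pmf_iff e_def pmf_positive)
      show "g_alpha qc a (card S) \<le> real (card S) * M" using gb cardS S by blast
      show "0 \<le> exp e * pmf \<nu> S + a * E" using apos by (simp add: E_def)
      show "0 \<le> g_alpha qc a (card S)" unfolding g_alpha_def by (intro sum_nonneg) auto
    qed
    also have "\<dots> = M * exp e * (\<Sum>S\<in>set_pmf \<nu>. real (card S) * pmf \<nu> S)
        + a * E * M * (\<Sum>S\<in>set_pmf \<nu>. real (card S))"
    proof -
      have "(\<Sum>S\<in>set_pmf \<nu>. (exp e * pmf \<nu> S + a * E) * (real (card S) * M))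
          = (\<Sum>S\<in>set_pmf \<nu>. (M * exp e) * (real (card S) * pmf \<nu> S) + (a * E * M) * real (card S))"
        by (rule sum.cong) (simp_all add: algebra_simps)
      also have "\<dots> = (\<Sum>S\<in>set_pmf \<nu>. (M * exp e) * (real (card S) * pmf \<nu> S)) + (\<Sum>S\<in>set_pmf \<nu>. (a * E * M) * real (card S))"
        by (rule sum.distrib)
      also have "\<dots> = M * exp e * (\<Sum>S\<in>set_pmf \<nu>. real (card S) * pmf \<nu> S)
        + a * E * M * (\<Sum>S\<in>set_pmf \<nu>. real (card S))"
        by (simp only: sum_distrib_left)
      finally show ?thesis .
    qed
    also have "\<dots> \<le> M * exp e * (1 - \<delta>) + a * E * M * (real N * 2 ^ N)"
    proof (intro add_mono mult_left_mono)
      show "(\<Sum>S\<in>set_pmf \<nu>. real (card S) * pmf \<nu> S) \<le> 1 - \<delta>"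
        using assms(9)[OF nuF] exp_eq by simp
      have "(\<Sum>S\<in>set_pmf \<nu>. real (card S)) \<le> (\<Sum>S\<in>set_pmf \<nu>. real N)"
        by (intro sum_mono) (use cardS in auto)
      also have "\<dots> = real N * card (set_pmf \<nu>)" by simp
      also have "card (set_pmf \<nu>) \<le> card (Pow U)" using U by (intro card_mono) auto
      hence "real N * card (set_pmf \<nu>) \<le> real N * 2 ^ N" using U N_def
        by (simp add: card_Pow mult_left_mono)
      finally show "(\<Sum>S\<in>set_pmf \<nu>. real (card S)) \<le> real N * 2 ^ N" .
    qed (use Mpos apos in \<open>auto simp: E_def\<close>)
    also have "M * exp e * (1 - \<delta>) + a * E * M * (real N * 2 ^ N) \<le> M * exp e * (1 - \<delta>) + a * M"
    proof -
      have NN: "real N \<le> 2 ^ N" 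
      proof -
        have "real N < real (2 ^ N)" using less_exp[of N] by (simp only: of_nat_less_iff)
        thus ?thesis by simp
      qed
      have "e * (1 - a) / a = 10 * (1 - a) * D * ln q"
        unfolding e_def a_def using assms lnqpos by (simp add: field_simps)
      also have "\<dots> \<ge> 5 * D * ln q" using alt assms lnqpos by (simp add: mult_right_mono)
      finally have "e * (1 - a) / a \<ge> 5 * D * ln q" .
      moreover have "5 * D * ln q \<ge> 2 * real N * ln 2"
      proof -
        have "real N * ln 2 \<le> D * ln q" using U(2) N_def lnq ln2 by (intro mult_mono) auto
        moreover have "0 \<le> D * ln q" using assms(3) lnqpos by simp
        ultimately show ?thesis by linarith
      qed
      ultimately have Eb: "E \<le> exp (- (2 * real N * ln 2))" unfolding E_def by simp
      have x: "exp (real N * ln 2) = 2 ^ N" by (simp add: exp_of_nat_mult)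
      have "2 * real N * ln 2 = real N * ln 2 + real N * ln 2" by simp
      hence "exp (2 * real N * ln 2) = 2 ^ N * 2 ^ N" using x by (simp only: exp_add)
      hence ex: "exp (- (2 * real N * ln 2)) = inverse (2 ^ N * 2 ^ N)" by (simp only: exp_minus)
      define P :: real where "P = 2 ^ N * 2 ^ N"
      have Ppos: "P > 0" unfolding P_def by simp
      have YP: "real N * 2 ^ N \<le> P" unfolding P_def using NN by (intro mult_right_mono) auto
      have "E * (real N * 2 ^ N) \<le> inverse P * (real N * 2 ^ N)"
        using Eb ex unfolding P_def by (intro mult_right_mono) auto
      also have "\<dots> \<le> inverse P * P" using YP Ppos by (intro mult_left_mono) auto
      also have "\<dots> = 1" using Ppos by simp
      finally have "E * (real N * 2 ^ N) \<le> 1" .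
      hence "(a * M) * (E * (real N * 2 ^ N)) \<le> (a * M) * 1"
        using apos Mpos by (intro mult_left_mono) auto
      hence "a * E * M * (real N * 2 ^ N) \<le> a * M" by (simp add: mult_ac)
      thus ?thesis by linarith
    qed
    also have "M * exp e * (1 - \<delta>) + a * M = c" unfolding c_def by (simp add: algebra_simps)
    finally show ?thesis .
  qed
  have "(SUP \<nu>\<in>F. beta_sum qc a \<nu>) \<le> c" by (rule cSUP_least[OF assms(7) bound])
  moreover have "c < 1"
  proof -
    have e1: "exp e \<le> 1 + \<delta> / 5"
    proof -
      have h: "exp e \<le> 1 + e + e^2" using exp_bound[of e] assms unfolding e_def by simp
      have "e * e \<le> e * 1" using assms unfolding e_def by (intro mult_left_mono) auto
      hence "e^2 \<le> e" by (simp add: power2_eq_square)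
      thus ?thesis using h unfolding e_def by linarith
    qed
    have m1: "M \<le> 1 + \<delta> / 50"
    proof -
      have h: "exp (\<delta>/100) \<le> 1 + \<delta>/100 + (\<delta>/100)^2" using exp_bound[of "\<delta>/100"] assms by simp
      have "(\<delta>/100) * (\<delta>/100) \<le> (\<delta>/100) * 1" using assms by (intro mult_left_mono) auto
      hence "(\<delta>/100)^2 \<le> \<delta>/100" by (simp add: power2_eq_square)
      thus ?thesis using h unfolding M_def by linarith
    qed
    have "exp e * (1 - \<delta>) \<le> (1 + \<delta> / 5) * (1 - \<delta>)" using e1 assms by (intro mult_right_mono) auto
    hence i1: "exp e * (1 - \<delta>) + a \<le> 1 - 39 * \<delta> / 50" using ale assms
    proof -
      have "(1 + \<delta> / 5) * (1 - \<delta>) = 1 - 4 * \<delta> / 5 - \<delta> * \<delta> / 5" by (simp add: field_simps)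
      moreover have "\<delta> * \<delta> \<ge> 0" by simp
      ultimately show ?thesis using ale \<open>exp e * (1 - \<delta>) \<le> (1 + \<delta> / 5) * (1 - \<delta>)\<close> by linarith
    qed
    have "exp e * (1 - \<delta>) + a > 0" using apos assms by (simp add: add_pos_pos)
    hence "c \<le> (1 + \<delta> / 50) * (1 - 39 * \<delta> / 50)" unfolding c_def using m1 i1 Mpos
      by (intro mult_mono) auto
    also have "\<dots> < 1"
    proof -
      have "(1 + \<delta> / 50) * (1 - 39 * \<delta> / 50) = 1 - 38 * \<delta> / 50 - 39 * (\<delta> * \<delta>) / 2500" by (simp add: field_simps)
      moreover have "\<delta> * \<delta> \<ge> 0" by simp
      ultimately show ?thesis using assms(1) by linarith
    qed
    finally show ?thesis .
  qed
  ultimately show ?thesis unfolding a_def by simp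
qed

end
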